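(* Consider the uplink access-probability optimization problem $$\max_{\mathbf p=(p_1,\dots,p_N)} \ \eta(\mathbf p)=\sum_{\boldsymbol\sigma\in\mathcal I}\sum_{j=1}^N R_j^{\boldsymbol\sigma}\,\sigma_j\,\pi(\boldsymbol\sigma)$$ subject to $\mathsf{EC}_j(\mathbf p;\theta_j)\ge \mathsf{EB}_j(\theta_j)$ and $0<p_j\le 1$ for all $j=1,\dots,N$, where all quantities are as defined in the context. This optimization problem is non-concave with respect to the access probability vector $\mathbf p$.
   Context: A coordinator with $M$ photo-detectors serves $N$ devices ($N>M$), each with a single LED. In each time slot, device $j$ transmits independently with access probability $p_j$, and its line-of-sight link is unblocked independently with probability $\beta_j\in(0,1]$. A state is a vector $\boldsymbol\sigma=(\sigma_1,\dots,\sigma_N)\in\{0,1\}^N$, where $\sigma_j=1$ means device $j$ transmits and is unblocked. Its probability is $\pi(\boldsymbol\sigma)=\prod_{k=1}^N\big[(1-\sigma_k)(1-p_k\beta_k)+\sigma_k p_k\beta_k\big]$. The set of feasible access states is $\mathcal I=\{\boldsymbol\sigma:\sum_j\sigma_j\le M\}$. In a feasible state $\boldsymbol\sigma$ with $\sigma_j=1$, device $j$ achieves rate $R_j^{\boldsymbol\sigma}=B\log_2(1+\gamma_j^{\boldsymbol\sigma})$. Here $B>0$ is the bandwidth and $\gamma_j^{\boldsymbol\sigma}$ is the SINR of device $j$ under ideal (error-free) MMSE successive interference cancellation at the coordinator: $$\gamma_j^{\boldsymbol\sigma}=\xi^2P_t^2\,\mathbf h_j^T\Big(\sum_{k}\xi^2P_t^2\mathbf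 h_k\mathbf h_k^T+\sigma_{\mathrm{VLC}}^2\mathbf I_M\Big)^{-1}\mathbf h_j .$$ The sum runs over the active devices $k$ decoded after $j$ in the SIC order. The parameters are as follows: - $\mathbf h_j\in\mathbb R_{\ge0}^M$ is the fixed line-of-sight channel gain vector of device $j$; - $\xi>0$ is the detector responsivity; - $P_t>0$ is the transmit power; - $\sigma_{\mathrm{VLC}}^2>0$ is the noise variance. In an infeasible state, no device is decoded and it has rate $0$. The effective capacity of device $j$ with QoS exponent $\theta_j>0$ is $$\mathsf{EC}_j(\mathbf p;\theta_j)=-\frac1{\theta_j}\ln\Big\{1-\sum_{\boldsymbol\sigma\in\mathcal I}\big(1-e^{-\theta_jR_j^{\boldsymbol\sigma}}\big)\sigma_j\pi(\boldsymbol\sigma)\Big\}.$$ $\mathsf{EB}_j(\theta_j)$ is the effective bandwidth of device $j$'s arrival process: $\mathsf{EB}_j(\theta_j)=\frac1{\theta_j}\lim_{t\to\infty}\frac1t\ln\mathbb E[e^{\theta_jA_j(t)}]$, where $A_j(t)$ is the accumulated arrival process of device $j$ over $[0,t)$. A maximization problem is called concave if its objective is concave and its feasible set is convex. *)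

theory Defs
  imports "HOL-Analysis.Analysis"
begin

text \<open>Devices are indexed by a finite type 'n (N = CARD('n)), photo-detectors by a
finite type 'm (M = CARD('m)).  A state sigma in {0,1}^N is represented by the set A of
devices j with sigma_j = 1.  The SIC decoding order is given by an injective
ranking ord : 'n => nat; device k is decoded after device j iff ord j < ord k.\<close>

definition outer :: "real^'m \<Rightarrow> real^'m^'m" where
  "outer v = (\<chi> i l. v $ i * v $ l)"

definition sinr ::
  "real \<Rightarrow> real \<Rightarrow> real \<Rightarrow> ('n \<Rightarrow> nat) \<Rightarrow> ('n \<Rightarrow> real^'m) \<Rightarrow> 'n set \<Rightarrow> 'n \<Rightarrow> real" where
  "sinr xi Pt s2 ord h A j =
     xi^2 * Pt^2 * (h j \<bullet> (matrix_inv
        ((\<Sum>k\<in>{k\<in>A. ord j < ord k}. (xi^2 * Pt^2) *\<^sub>R outer (h k)) + s2 *\<^sub>R mat 1)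
        *v h j))"

definition rate ::
  "real \<Rightarrow> real \<Rightarrow> real \<Rightarrow> real \<Rightarrow> ('n \<Rightarrow> nat) \<Rightarrow> ('n \<Rightarrow> real^'m) \<Rightarrow> 'n set \<Rightarrow> 'n \<Rightarrow> real" where
  "rate B xi Pt s2 ord h A j = B * log 2 (1 + sinr xi Pt s2 ord h A j)"

definition state_prob :: "real^'n \<Rightarrow> ('n \<Rightarrow> real) \<Rightarrow> 'n set \<Rightarrow> real" where
  "state_prob p \<beta> A = (\<Prod>k\<in>UNIV. if k \<in> A then p $ k * \<beta> k else 1 - p $ k * \<beta> k)"

definition feasible_states :: "'m itself \<Rightarrow> 'n::finite set set" where
  "feasible_states _ = {A. card A \<le> CARD('m)}"

definition throughput ::
  "real \<Rightarrow> real \<Rightarrow> real \<Rightarrow> real \<Rightarrow> ('n::finite \<Rightarrow> nat) \<Rightarrow> ('n \<Rightarrow> real^'m) \<Rightarrow> ('n \<Rightarrow> real)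
   \<Rightarrow> real^'n \<Rightarrow> real" where
  "throughput B xi Pt s2 ord h \<beta> p =
     (\<Sum>A\<in>feasible_states TYPE('m). \<Sum>j\<in>A. rate B xi Pt s2 ord h A j * state_prob p \<beta> A)"

definition eff_cap ::
  "real \<Rightarrow> real \<Rightarrow> real \<Rightarrow> real \<Rightarrow> ('n::finite \<Rightarrow> nat) \<Rightarrow> ('n \<Rightarrow> real^'m) \<Rightarrow> ('n \<Rightarrow> real)
   \<Rightarrow> real \<Rightarrow> 'n \<Rightarrow> real^'n \<Rightarrow> real" where
  "eff_cap B xi Pt s2 ord h \<beta> \<theta> j p =
     - (1 / \<theta>) * ln (1 - (\<Sum>A\<in>{A\<in>feasible_states TYPE('m). j \<in> A}.
          (1 - exp (- \<theta> * rate B xi Pt s2 ord h A j)) * state_prob p \<beta> A))"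

definition feasible_set ::
  "real \<Rightarrow> real \<Rightarrow> real \<Rightarrow> real \<Rightarrow> ('n::finite \<Rightarrow> nat) \<Rightarrow> ('n \<Rightarrow> real^'m) \<Rightarrow> ('n \<Rightarrow> real)
   \<Rightarrow> ('n \<Rightarrow> real) \<Rightarrow> ('n \<Rightarrow> real) \<Rightarrow> (real^'n) set" where
  "feasible_set B xi Pt s2 ord h \<beta> \<theta> EB =
     {p. \<forall>j. 0 < p $ j \<and> p $ j \<le> 1 \<and> eff_cap B xi Pt s2 ord h \<beta> (\<theta> j) j p \<ge> EB j}"

definition concave_max_problem :: "'a::real_vector set \<Rightarrow> ('a \<Rightarrow> real) \<Rightarrow> bool" where
  "concave_max_problem F f \<longleftrightarrow> convex F \<and> concave_on F f"

end

theory Submission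
  imports Defs
begin

lemma matrix_inv_mat1: "matrix_inv (mat 1 :: real^'m^'m) = mat 1"
proof -
  have "\<exists>A'::real^'m^'m. mat 1 ** A' = mat 1 \<and> A' ** mat 1 = mat 1" by (intro exI[of _ "mat 1"]) simp
  then have "mat 1 ** matrix_inv (mat 1 :: real^'m^'m) = mat 1"
    unfolding matrix_inv_def by (rule someI_ex[THEN conjunct1])
  then show ?thesis by (simp add: matrix_mul_lid)
qed

lemma rate_simp:
  fixes h :: "'n \<Rightarrow> real^'m" and j0 :: 'n
  assumes "h = (\<lambda>j. if j = j0 then (\<chi> i. 1) else 0)"
  shows "rate 1 1 1 1 ord h A j = (if j = j0 then log 2 (1 + real CARD('m)) else 0)"
proof (cases "j = j0")
  case True
  have "(\<Sum>k\<in>{k\<in>A. ord j < ord k}. (1^2 * 1^2) *\<^sub>R outer (h k)) = 0"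
    using True by (intro sum.neutral) (auto simp: assms outer_def vec_eq_iff)
  then have "sinr 1 1 1 ord h A j = h j0 \<bullet> h j0"
    unfolding sinr_def using True by (simp add: matrix_inv_mat1 matrix_vector_mul_lid)
  also have "\<dots> = real CARD('m)" by (simp add: assms inner_vec_def)
  finally show ?thesis using True unfolding rate_def by simp
next
  case False
  then show ?thesis unfolding rate_def sinr_def by (simp add: assms)
qed

theorem theorem3p1:
  assumes "CARD('n::finite) > CARD('m::finite)"
  shows "\<exists>(B::real) (xi::real) (Pt::real) (s2::real) (ord::'n \<Rightarrow> nat) (h::'n \<Rightarrow> real^'m)
            (\<beta>::'n \<Rightarrow> real) (\<theta>::'n \<Rightarrow> real) (EB::'n \<Rightarrow> real).
           B > 0 \<and> xi > 0 \<and> Pt > 0 \<and> s2 > 0 \<and> inj ord \<and>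
           (\<forall>j i. h j $ i \<ge> 0) \<and> (\<forall>j. 0 < \<beta> j \<and> \<beta> j \<le> 1) \<and>
           (\<forall>j. \<theta> j > 0) \<and> (\<forall>j. EB j \<ge> 0) \<and>
           \<not> concave_max_problem (feasible_set B xi Pt s2 ord h \<beta> \<theta> EB)
                                  (throughput B xi Pt s2 ord h \<beta>)"
proof -
  define M where "M = CARD('m)"
  define N where "N = CARD('n)"
  have M1: "M \<ge> 1" unfolding M_def by (simp add: Suc_leI)
  have NM: "N > M" using assms unfolding M_def N_def by simp
  obtain j0 :: 'n where True by simp
  have "UNIV - {j0} \<noteq> {}"
  proof
    assume "UNIV - {j0} = {}"
    then have "(UNIV::'n set) = {j0}" by auto
    then have "card (UNIV::'n set) = card {j0}" by (rule arg_cong)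
    then have "N = 1" unfolding N_def by simp
    then show False using NM M1 by simp
  qed
  then obtain k where "k \<in> UNIV - {j0}" by blast
  then have jk: "j0 \<noteq> k" by blast
  have "card (UNIV - {j0, k}) = N - 2" unfolding N_def using jk
    by (simp add: card_Diff_subset)
  then have "M - 1 \<le> card (UNIV - {j0, k})" using NM by simp
  then obtain T where T: "T \<subseteq> UNIV - {j0, k}" "card T = M - 1"
    by (rule obtain_subset_with_card_n)
  define r where "r = log 2 (1 + real CARD('m))"
  define h :: "'n \<Rightarrow> real^'m" where "h = (\<lambda>j. if j = j0 then (\<chi> i. 1) else 0)"
  define ord :: "'n \<Rightarrow> nat" where "ord = to_nat_on (UNIV::'n set)"
  define P :: "real \<Rightarrow> real^'n" where
    "P s = (\<chi> i. if i = j0 then s else if i = k then 1 - s else if i \<in> T then 1 else 1/2)" for s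
  define A0 where "A0 = insert j0 T"
  define c where "c = (\<Prod>i\<in>UNIV-{j0,k}. if i \<in> T then 1 else (1/2::real))"
  define F :: "'n set set" where "F = feasible_states TYPE('m)"
  have inj: "inj ord" unfolding ord_def by (rule inj_on_to_nat_on) simp
  have rate: "rate 1 1 1 1 ord h A j = (if j = j0 then r else 0)" for A j
    using rate_simp[OF h_def] unfolding r_def by simp
  have r_pos: "r > 0" unfolding r_def by simp
  have A0F: "A0 \<in> F"
  proof -
    have "j0 \<notin> T" using T by auto
    then have "card A0 = M" unfolding A0_def using T M1 by (simp add: card_insert_if)
    then show ?thesis unfolding F_def feasible_states_def M_def by simp
  qed
  have zero: "state_prob (P s) (\<lambda>_. 1) A = 0" if "A \<in> F" "j0 \<in> A" "A \<noteq> A0" for s A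
  proof (cases "T \<subseteq> A")
    case False
    then obtain t where t: "t \<in> T" "t \<notin> A" by auto
    then have "P s $ t = 1" using T unfolding P_def by auto
    then show ?thesis unfolding state_prob_def using t
      by (intro prod_zero) auto
  next
    case True
    then have "A0 \<subset> A" using that unfolding A0_def by auto
    then have "card A0 < card A" by (simp add: psubset_card_mono)
    moreover have "card A0 = M" using A0F
    proof -
      have "j0 \<notin> T" using T by auto
      then show "card A0 = M" unfolding A0_def using T M1 by (simp add: card_insert_if)
    qed
    moreover have "card A \<le> M" using that unfolding F_def feasible_states_def M_def by simp
    ultimately show ?thesis by simp
  qed
  have red: "(\<Sum>A\<in>{A\<in>F. j0 \<in> A}. g A * state_prob (P s) (\<lambda>_. 1) A)
      = g A0 * state_prob (P s) (\<lambda>_. 1) A0" for g s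
  proof -
    have fin: "finite {A\<in>F. j0 \<in> A}" by simp
    have mem: "A0 \<in> {A\<in>F. j0 \<in> A}" using A0F unfolding A0_def by simp
    have "(\<Sum>A\<in>{A\<in>F. j0 \<in> A}. g A * state_prob (P s) (\<lambda>_. 1) A)
       = g A0 * state_prob (P s) (\<lambda>_. 1) A0 + (\<Sum>A\<in>{A\<in>F. j0 \<in> A} - {A0}. g A * state_prob (P s) (\<lambda>_. 1) A)"
      by (rule sum.remove[OF fin mem])
    also have "(\<Sum>A\<in>{A\<in>F. j0 \<in> A} - {A0}. g A * state_prob (P s) (\<lambda>_. 1) A) = 0"
      by (intro sum.neutral) (auto simp: zero)
    finally show ?thesis by simp
  qed
  have spA0: "state_prob (P s) (\<lambda>_. 1) A0 = s * s * c" for s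
  proof -
    let ?f = "\<lambda>i. if i \<in> A0 then P s $ i * 1 else 1 - P s $ i * 1"
    have "state_prob (P s) (\<lambda>_. 1) A0 = ?f j0 * (?f k * prod ?f (UNIV - {j0} - {k}))"
      unfolding state_prob_def
      by (simp add: prod.remove[of UNIV j0] prod.remove[of "UNIV - {j0}" k] jk[symmetric])
    also have "prod ?f (UNIV - {j0} - {k}) = c" unfolding c_def
      by (intro prod.cong) (auto simp: P_def A0_def)
    also have "?f j0 = s" by (simp add: A0_def P_def)
    also have "?f k = s" using T jk by (auto simp: A0_def P_def)
    finally show ?thesis by simp
  qed
  have c_pos: "c > 0" unfolding c_def by (intro prod_pos) auto
  have c_le: "c \<le> 1" unfolding c_def by (intro prod_le_1) auto
  have thr: "throughput 1 1 1 1 ord h (\<lambda>_. 1) (P s) = r * (s * s * c)" for s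
  proof -
    have "throughput 1 1 1 1 ord h (\<lambda>_. 1) (P s)
        = (\<Sum>A\<in>F. if j0 \<in> A then r * state_prob (P s) (\<lambda>_. 1) A else 0)"
      unfolding throughput_def F_def[symmetric] rate
      by (intro sum.cong refl) (simp add: if_distrib[of "\<lambda>x. x * _"] sum.delta cong: if_cong)
    also have "\<dots> = (\<Sum>A\<in>{A\<in>F. j0 \<in> A}. r * state_prob (P s) (\<lambda>_. 1) A)"
      by (simp add: sum.inter_filter)
    also have "\<dots> = r * (s * s * c)" using red[of "\<lambda>_. r" s] spA0 by simp
    finally show ?thesis .
  qed
  have inF: "P s \<in> feasible_set 1 1 1 1 ord h (\<lambda>_. 1) (\<lambda>_. 1) (\<lambda>_. 0)" if s: "0 < s" "s < 1" for s
  proof -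
    have "eff_cap 1 1 1 1 ord h (\<lambda>_. 1) 1 j (P s) \<ge> 0" for j
    proof (cases "j = j0")
      case True
      have e: "exp (- r) < 1" "0 < exp (-r)" using r_pos by auto
      have ss: "s * s < 1" "0 < s * s" using s mult_strict_mono[of s 1 s 1] by auto
      let ?x = "(1 - exp (- r)) * (s * s * c)"
      have "?x < 1"
      proof -
        have "s * s * c \<le> s * s * 1" using ss c_le by (intro mult_left_mono) auto
        then have a: "s * s * c < 1" using ss by linarith
        have "?x \<le> 1 * (s * s * c)" using e ss c_pos by (intro mult_right_mono) auto
        then show ?thesis using a by linarith
      qed
      moreover have "?x > 0" using e ss c_pos by simp
      ultimately have "ln (1 - ?x) \<le> 0" by simp
      moreover have "eff_cap 1 1 1 1 ord h (\<lambda>_. 1) 1 j (P s) = - ln (1 - ?x)"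
        unfolding eff_cap_def F_def[symmetric] rate True using red[of "\<lambda>_. 1 - exp (- r)" s] spA0
        by simp
      ultimately show ?thesis by simp
    next
      case False
      then show ?thesis unfolding eff_cap_def rate by simp
    qed
    moreover have "0 < P s $ j \<and> P s $ j \<le> 1" for j using s unfolding P_def by auto
    ultimately show ?thesis unfolding feasible_set_def by auto
  qed
  have mid: "(1 - 1/2) *\<^sub>R P (1/4) + (1/2) *\<^sub>R P (3/4) = P (1/2)"
    unfolding P_def by (simp add: vec_eq_iff)
  have notc: "\<not> concave_max_problem (feasible_set 1 1 1 1 ord h (\<lambda>_. 1) (\<lambda>_. 1) (\<lambda>_. 0))
                                  (throughput 1 1 1 1 ord h (\<lambda>_. 1))"
  proof
    assume "concave_max_problem (feasible_set 1 1 1 1 ord h (\<lambda>_. 1) (\<lambda>_. 1) (\<lambda>_. 0))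
                                  (throughput 1 1 1 1 ord h (\<lambda>_. 1))"
    then have cv: "convex_on (feasible_set 1 1 1 1 ord h (\<lambda>_. 1) (\<lambda>_. 1) (\<lambda>_. 0))
                  (\<lambda>x. - throughput 1 1 1 1 ord h (\<lambda>_. 1) x)"
      unfolding concave_max_problem_def concave_on_def by simp
    have "- throughput 1 1 1 1 ord h (\<lambda>_. 1) ((1 - 1/2) *\<^sub>R P (1/4) + (1/2) *\<^sub>R P (3/4))
       \<le> (1 - 1/2) * - throughput 1 1 1 1 ord h (\<lambda>_. 1) (P (1/4))
         + (1/2) * - throughput 1 1 1 1 ord h (\<lambda>_. 1) (P (3/4))"
      by (rule convex_onD[OF cv]) (auto intro: inF)
    then have "r * c * (1/4) \<ge> r * c * (5/16)" unfolding mid thr by (simp add: algebra_simps)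
    moreover have "r * c > 0" using r_pos c_pos by simp
    ultimately show False by (simp add: mult.commute)
  qed
  have hnn: "\<forall>j i. h j $ i \<ge> 0" unfolding h_def by simp
  show ?thesis
    apply (rule exI[of _ 1], rule exI[of _ 1], rule exI[of _ 1], rule exI[of _ 1])
    apply (rule exI[of _ ord], rule exI[of _ h], rule exI[of _ "\<lambda>_. 1"], rule exI[of _ "\<lambda>_. 1"])
    apply (rule exI[of _ "\<lambda>_. 0"])
    using inj hnn notc by simp
qed

end
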